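(* Let $\alpha>0$, $t_0>0$, $x_0\in\mathcal H$, let $x$ be a solution of the Cauchy problem $$\tfrac{\alpha}{t}\dot x(t)+\operatorname{proj}_{C(x(t))+\ddot x(t)}(0)=0\ (t>t_0),\qquad x(t_0)=x_0,\ \dot x(t_0)=0,$$ and let $\theta:[t_0,+\infty)\to\Delta^m$ be a measurable function with $\operatorname{proj}_{C(x(t))+\ddot x(t)}(0)=\sum_i\theta_i(t)\nabla f_i(x(t))+\ddot x(t)$ for all $t$. Let $z\in\mathcal H$, $\mathcal W_i(t)=f_i(x(t))+\frac12\|\dot x(t)\|^2$ and $h_z(t)=\frac12\|x(t)-z\|^2$. Then for all $t\in[t_0,+\infty)$, $$\int_{t_0}^t\frac1s\sum_{i=1}^m\theta_i(s)\big(\mathcal W_i(s)-f_i(z)\big)\,ds+\frac{3}{2\alpha}\sum_{i=1}^m\theta_i(t)\big(\mathcal W_i(t)-f_i(z)\big)\le C_z-\frac1t\dot h_z(t),$$ with $C_z=(\alpha+1)\frac{1}{t_0^2}h_z(t_0)+\frac{3}{2\alpha}\max_{i=1,\dots,m}\big(f_i(x_0)-f_i(z)\big)$.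
   Context: $\mathcal H$ is a real Hilbert space. $f_1,\dots,f_m:\mathcal H\to\mathbb R$ are convex and continuously differentiable. $C(x)=\operatorname{co}\{\nabla f_i(x):i=1,\dots,m\}$. For a closed convex $K$, $\operatorname{proj}_K(y)=\arg\min_{w\in K}\|w-y\|^2$. $\Delta^m=\{\theta\in\mathbb R^m:\theta\ge0,\ \sum_i\theta_i=1\}$. A solution of the Cauchy problem is a function $x:[t_0,+\infty)\to\mathcal H$ such that: $x\in C^1([t_0,+\infty))$; $\dot x$ is absolutely continuous on $[t_0,T]$ for every $T\ge t_0$; there is a Bochner measurable $\ddot x$ with $\dot x(t)=\dot x(t_0)+\int_{t_0}^t\ddot x(s)\,ds$ for all $t$, and $\frac{d}{dt}\dot x=\ddot x$ a.e.; the equation holds for almost all $t\ge t_0$; and the initial conditions hold. *)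

theory Defs
  imports "HOL-Analysis.Analysis"
begin

text \<open>Metric projection onto a set K: the (unique, for K nonempty closed convex in a
Hilbert space) minimiser of w \<mapsto> norm (w - y)^2 over K.\<close>
definition proj :: "'a::real_inner set \<Rightarrow> 'a \<Rightarrow> 'a" where
  "proj K y = (THE w. w \<in> K \<and> (\<forall>v\<in>K. (norm (w - y))\<^sup>2 \<le> (norm (v - y))\<^sup>2))"

definition prob_simplex :: "nat \<Rightarrow> (nat \<Rightarrow> real) set" where
  "prob_simplex m = {\<theta>. (\<forall>i<m. \<theta> i \<ge> 0) \<and> (\<Sum>i<m. \<theta> i) = 1}"

end

theory Submission
  imports Defs
begin
lemma telescope_zero:
  fixes F G :: "real \<Rightarrow> real"
  assumes le: "t0 \<le> t1"
    and H: "\<And>e. e > 0 \<Longrightarrow> \<exists>d>0. \<forall>S T. t0 \<le> S \<longrightarrow> S \<le> T \<longrightarrow> T \<le> t1 \<longrightarrow> T - S < d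
              \<longrightarrow> \<bar>F T - F S\<bar> \<le> e * (G T - G S)"
  shows "F t1 = F t0"
proof -
  have bnd: "\<bar>F t1 - F t0\<bar> \<le> e * (G t1 - G t0)" if e: "e > 0" for e
  proof -
    obtain d where d: "d > 0" and dH: "\<forall>S T. t0 \<le> S \<longrightarrow> S \<le> T \<longrightarrow> T \<le> t1 \<longrightarrow> T - S < d
              \<longrightarrow> \<bar>F T - F S\<bar> \<le> e * (G T - G S)" using H[OF e] by blast
    have ind: "\<forall>T. t0 \<le> T \<longrightarrow> T \<le> t1 \<longrightarrow> T - t0 \<le> real n * (d/2) \<longrightarrow> \<bar>F T - F t0\<bar> \<le> e * (G T - G t0)" for n
    proof (induction n)
      case 0
      then show ?case by auto
    next
      case (Suc n)
      show ?case
      proof (intro allI impI)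
        fix T assume T: "t0 \<le> T" "T \<le> t1" "T - t0 \<le> real (Suc n) * (d/2)"
        define S where "S = max t0 (T - d/2)"
        have S: "t0 \<le> S" "S \<le> T" "S \<le> t1" "S - t0 \<le> real n * (d/2)" "T - S < d"
          using T d mult_nonneg_nonneg[of d "real n"] by (auto simp: S_def algebra_simps max_def)
        have 1: "\<bar>F S - F t0\<bar> \<le> e * (G S - G t0)" using Suc.IH S by blast
        have 2: "\<bar>F T - F S\<bar> \<le> e * (G T - G S)" using dH S T by blast
        have "\<bar>F T - F t0\<bar> \<le> \<bar>F T - F S\<bar> + \<bar>F S - F t0\<bar>" by linarith
        also have "\<dots> \<le> e * (G T - G S) + e * (G S - G t0)" using 1 2 by linarith
        also have "\<dots> = e * (G T - G t0)" by (simp add: algebra_simps)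
        finally show "\<bar>F T - F t0\<bar> \<le> e * (G T - G t0)" .
      qed
    qed
    obtain n where n: "(t1 - t0) / (d/2) \<le> real n" using real_arch_simple by blast
    have "t1 - t0 \<le> real n * (d/2)" using n d by (simp add: field_simps)
    then show ?thesis using ind[of n] le by auto
  qed
  show ?thesis
  proof (rule ccontr)
    assume ne: "F t1 \<noteq> F t0"
    define K where "K = G t1 - G t0"
    have pos: "\<bar>F t1 - F t0\<bar> > 0" using ne by simp
    have "K > 0"
    proof (rule ccontr)
      assume "\<not> K > 0"
      then have "1 * K \<le> 0" by simp
      with bnd[of 1] pos show False unfolding K_def by linarith
    qed
    have "\<bar>F t1 - F t0\<bar> \<le> (\<bar>F t1 - F t0\<bar> / (2*K)) * K"
      using bnd[of "\<bar>F t1 - F t0\<bar> / (2*K)"] pos \<open>K > 0\<close> unfolding K_def by simp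
    also have "\<dots> = \<bar>F t1 - F t0\<bar> / 2" using \<open>K > 0\<close> by simp
    finally show False using pos by simp
  qed
qed
lemma product_rule_ac:
  fixes u v b a :: "real \<Rightarrow> 'a::real_inner"
  assumes le: "t0 \<le> t1"
   and cu: "continuous_on {t0..t1} u" and cv: "continuous_on {t0..t1} v"
   and hb: "\<And>w S T. t0 \<le> S \<Longrightarrow> S \<le> T \<Longrightarrow> T \<le> t1 \<Longrightarrow>
              ((\<lambda>s. inner w (b s)) has_integral inner w (u T - u S)) {S..T}"
   and ha: "\<And>w S T. t0 \<le> S \<Longrightarrow> S \<le> T \<Longrightarrow> T \<le> t1 \<Longrightarrow>
              ((\<lambda>s. inner w (a s)) has_integral inner w (v T - v S)) {S..T}"
   and nb: "(\<lambda>s. norm (b s)) integrable_on {t0..t1}"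
   and na: "(\<lambda>s. norm (a s)) integrable_on {t0..t1}"
   and ib: "(\<lambda>s. inner (b s) (v s)) integrable_on {t0..t1}"
   and ia: "(\<lambda>s. inner (u s) (a s)) integrable_on {t0..t1}"
  shows "((\<lambda>s. inner (b s) (v s) + inner (u s) (a s)) has_integral
            (inner (u t1) (v t1) - inner (u t0) (v t0))) {t0..t1}"
proof -
  define \<phi> where "\<phi> s = inner (b s) (v s) + inner (u s) (a s)" for s
  define N where "N s = norm (a s) + norm (b s)" for s
  define F where "F T = inner (u T) (v T) - inner (u t0) (v t0) - integral {t0..T} \<phi>" for T
  define G where "G T = integral {t0..T} N" for T
  have i\<phi>: "\<phi> integrable_on {t0..t1}" unfolding \<phi>_def using ib ia by (rule integrable_add)
  have iN: "N integrable_on {t0..t1}" unfolding N_def using na nb by (rule integrable_add)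
  have comb: "integral {t0..T} f = integral {t0..S} f + integral {S..T} f"
    if "f integrable_on {t0..t1}" "t0 \<le> S" "S \<le> T" "T \<le> t1" for f :: "real \<Rightarrow> real" and S T
  proof -
    have "f integrable_on {t0..T}" using that by (auto intro: integrable_subinterval_real)
    then show ?thesis using Henstock_Kurzweil_Integration.integral_combine[where a=t0 and c=S and b=T and f=f] that by simp
  qed
  have key: "F T - F S = integral {S..T} (\<lambda>s. inner (b s) (v T - v s) + inner (u S - u s) (a s))
     \<and> (\<lambda>s. inner (b s) (v T - v s) + inner (u S - u s) (a s)) integrable_on {S..T}"
    if ST: "t0 \<le> S" "S \<le> T" "T \<le> t1" for S T
  proof -
    have h1: "((\<lambda>s. inner (v T) (b s)) has_integral inner (v T) (u T - u S)) {S..T}" using hb ST by blast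
    have h2: "((\<lambda>s. inner (u S) (a s)) has_integral inner (u S) (v T - v S)) {S..T}" using ha ST by blast
    have "\<phi> integrable_on {S..T}" using i\<phi> ST by (auto intro: integrable_subinterval_real)
    then have h3: "(\<phi> has_integral integral {S..T} \<phi>) {S..T}" by auto
    have h4: "((\<lambda>s. inner (v T) (b s) + inner (u S) (a s) - \<phi> s) has_integral
        (inner (v T) (u T - u S) + inner (u S) (v T - v S) - integral {S..T} \<phi>)) {S..T}"
      by (intro has_integral_diff has_integral_add h1 h2 h3)
    have eqf: "(\<lambda>s. inner (v T) (b s) + inner (u S) (a s) - \<phi> s) =
       (\<lambda>s. inner (b s) (v T - v s) + inner (u S - u s) (a s))"
      by (auto simp: \<phi>_def inner_diff_left inner_diff_right inner_commute)
    have "F T - F S = inner (v T) (u T - u S) + inner (u S) (v T - v S) - integral {S..T} \<phi>"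
      using comb[OF i\<phi> ST] by (simp add: F_def inner_diff_left inner_diff_right inner_commute)
    with h4 eqf show ?thesis by (auto simp: integral_unique intro: has_integral_integrable)
  qed
  have "F t1 = F t0"
  proof (rule telescope_zero[OF le])
    fix e :: real assume e: "e > 0"
    have uu: "uniformly_continuous_on {t0..t1} u" "uniformly_continuous_on {t0..t1} v"
      using cu cv by (auto intro: compact_uniformly_continuous)
    obtain d1 where d1: "d1 > 0" "\<forall>s\<in>{t0..t1}. \<forall>s'\<in>{t0..t1}. dist s' s < d1 \<longrightarrow> dist (u s') (u s) < e"
      using uu(1) e unfolding uniformly_continuous_on_def by metis
    obtain d2 where d2: "d2 > 0" "\<forall>s\<in>{t0..t1}. \<forall>s'\<in>{t0..t1}. dist s' s < d2 \<longrightarrow> dist (v s') (v s) < e"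
      using uu(2) e unfolding uniformly_continuous_on_def by metis
    show "\<exists>d>0. \<forall>S T. t0 \<le> S \<longrightarrow> S \<le> T \<longrightarrow> T \<le> t1 \<longrightarrow> T - S < d
              \<longrightarrow> \<bar>F T - F S\<bar> \<le> e * (G T - G S)"
    proof (intro exI[of _ "min d1 d2"] conjI allI impI)
      show "min d1 d2 > 0" using d1 d2 by simp
      fix S T assume ST: "t0 \<le> S" "S \<le> T" "T \<le> t1" "T - S < min d1 d2"
      define \<psi> where "\<psi> s = inner (b s) (v T - v s) + inner (u S - u s) (a s)" for s
      have k: "F T - F S = integral {S..T} \<psi>" "\<psi> integrable_on {S..T}"
        using key[OF ST(1-3)] unfolding \<psi>_def by auto
      have iN': "(\<lambda>s. e * N s) integrable_on {S..T}"
      proof -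
        have "N integrable_on {S..T}" using iN ST by (auto intro: integrable_subinterval_real)
        then show ?thesis by (metis integrable_on_mult_right)
      qed
      have bd: "norm (\<psi> s) \<le> e * N s" if s: "s \<in> {S..T}" for s
      proof -
        have s': "s \<in> {t0..t1}" "S \<in> {t0..t1}" "T \<in> {t0..t1}" using s ST by auto
        have "dist T s < d2" "dist s S < d1" using s ST by (auto simp: dist_real_def)
        then have nv: "norm (v T - v s) \<le> e" and nu: "norm (u S - u s) \<le> e"
          using d1(2) d2(2) s' by (auto simp: dist_norm dist_commute less_imp_le)
        have "\<bar>\<psi> s\<bar> \<le> \<bar>inner (b s) (v T - v s)\<bar> + \<bar>inner (u S - u s) (a s)\<bar>"
          unfolding \<psi>_def by linarith
        also have "\<dots> \<le> norm (b s) * norm (v T - v s) + norm (u S - u s) * norm (a s)"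
          by (intro add_mono Cauchy_Schwarz_ineq2)
        also have "\<dots> \<le> norm (b s) * e + e * norm (a s)"
          by (intro add_mono mult_left_mono mult_right_mono nv nu) auto
        finally show ?thesis by (simp add: N_def algebra_simps)
      qed
      have "\<bar>F T - F S\<bar> \<le> integral {S..T} (\<lambda>s. e * N s)"
        using integral_norm_bound_integral[OF k(2) iN' bd] k(1) by simp
      also have "\<dots> = e * (G T - G S)"
        using comb[OF iN ST(1-3)] by (simp add: G_def)
      finally show "\<bar>F T - F S\<bar> \<le> e * (G T - G S)" .
    qed
  qed
  then have "integral {t0..t1} \<phi> = inner (u t1) (v t1) - inner (u t0) (v t0)"
    by (simp add: F_def)
  then show ?thesis using i\<phi> unfolding \<phi>_def by (metis has_integral_integral)
qed
lemma proj_vi: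
  fixes K :: "'a::real_inner set"
  assumes cK: "compact K" and vK: "convex K" and nK: "K \<noteq> {}"
  shows "proj K 0 \<in> K \<and> (\<forall>c\<in>K. inner (proj K 0) (c - proj K 0) \<ge> 0)"
proof -
  have "continuous_on K (\<lambda>w. (norm (w - 0))\<^sup>2)" by (intro continuous_intros)
  then obtain w0 where w0: "w0 \<in> K" "\<forall>v\<in>K. (norm (w0 - 0))\<^sup>2 \<le> (norm (v - 0))\<^sup>2"
    using continuous_attains_inf[OF cK nK] by blast
  have uniq: "w = w0" if w: "w \<in> K" "\<forall>v\<in>K. (norm (w - 0))\<^sup>2 \<le> (norm (v - 0))\<^sup>2" for w
  proof -
    define mid where "mid = (1/2) *\<^sub>R w + (1/2) *\<^sub>R w0"
    have "mid \<in> K" unfolding mid_def using vK w(1) w0(1) by (intro convexD) auto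
    then have m1: "(norm w0)\<^sup>2 \<le> (norm mid)\<^sup>2" using w0 by auto
    have e: "(norm w)\<^sup>2 = (norm w0)\<^sup>2" using w w0 by force
    have "(norm mid)\<^sup>2 = (1/2) * (norm w)\<^sup>2 + (1/2) * (norm w0)\<^sup>2 - (1/4) * (norm (w - w0))\<^sup>2"
      unfolding mid_def power2_norm_eq_inner
      by (simp add: inner_add_left inner_add_right inner_diff_left inner_diff_right inner_commute algebra_simps)
    with m1 e have "(norm (w - w0))\<^sup>2 \<le> 0" by simp
    then show ?thesis by simp
  qed
  have pe: "proj K 0 = w0"
    unfolding proj_def
  proof (rule the_equality)
    show "w0 \<in> K \<and> (\<forall>v\<in>K. (norm (w0 - 0))\<^sup>2 \<le> (norm (v - 0))\<^sup>2)" using w0 by blast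
  next
    fix w assume "w \<in> K \<and> (\<forall>v\<in>K. (norm (w - 0))\<^sup>2 \<le> (norm (v - 0))\<^sup>2)"
    then show "w = w0" using uniq by blast
  qed
  have vi: "inner w0 (c - w0) \<ge> 0" if c: "c \<in> K" for c
  proof (rule ccontr)
    assume "\<not> inner w0 (c - w0) \<ge> 0"
    then have p: "inner w0 (c - w0) < 0" by simp
    define q where "q = (norm (c - w0))\<^sup>2"
    have "c \<noteq> w0" using p by auto
    then have q: "q > 0" unfolding q_def by simp
    define s where "s = min 1 (- inner w0 (c - w0) / q)"
    have s: "0 < s" "s \<le> 1" "s * q \<le> - inner w0 (c - w0)"
      using p q by (auto simp: s_def min_def field_simps)
    have "w0 + s *\<^sub>R (c - w0) = (1 - s) *\<^sub>R w0 + s *\<^sub>R c" by (simp add: algebra_simps)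
    also have "\<dots> \<in> K" using vK w0(1) c s by (intro convexD) auto
    finally have "(norm w0)\<^sup>2 \<le> (norm (w0 + s *\<^sub>R (c - w0)))\<^sup>2" using w0 by auto
    also have "\<dots> = (norm w0)\<^sup>2 + s * (2 * inner w0 (c - w0) + s * q)"
      unfolding q_def power2_norm_eq_inner
      by (simp add: inner_add_left inner_add_right inner_commute algebra_simps)
    finally have "0 \<le> s * (2 * inner w0 (c - w0) + s * q)" by simp
    moreover have "2 * inner w0 (c - w0) + s * q < 0" using s p by linarith
    ultimately show False using s(1) by (simp add: mult_less_0_iff zero_le_mult_iff)
  qed
  show ?thesis using pe w0(1) vi by auto
qed

lemma convex_grad_ineq:
  fixes f :: "'a::real_inner \<Rightarrow> real"
  assumes cf: "convex_on UNIV f" and df: "(f has_derivative (\<lambda>h. inner g h)) (at y)"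
  shows "f z \<ge> f y + inner g (z - y)"
proof -
  define \<phi> where "\<phi> s = f (y + s *\<^sub>R (z - y))" for s :: real
  have dl: "((\<lambda>s::real. y + s *\<^sub>R (z - y)) has_derivative (\<lambda>s. s *\<^sub>R (z - y))) (at 0)"
    by (auto intro!: derivative_eq_intros)
  have "(\<phi> has_derivative (\<lambda>s. inner g (s *\<^sub>R (z - y)))) (at 0)"
    unfolding \<phi>_def using has_derivative_compose[OF dl, of f "\<lambda>h. inner g h"] df by simp
  moreover have "(\<lambda>s. inner g (s *\<^sub>R (z - y))) = (*) (inner g (z - y))"
    by (auto simp: fun_eq_iff)
  ultimately have "(\<phi> has_field_derivative inner g (z - y)) (at 0)"
    by (simp add: has_field_derivative_def)
  then have "(\<phi> has_field_derivative inner g (z - y)) (at 0 within {0<..})"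
    by (rule has_field_derivative_at_within)
  then have lim: "((\<lambda>s. (\<phi> s - \<phi> 0) / (s - 0)) \<longlongrightarrow> inner g (z - y)) (at_right 0)"
    by (simp add: has_field_derivative_iff)
  have ev: "\<forall>\<^sub>F s in at_right 0. (\<phi> s - \<phi> 0) / (s - 0) \<le> f z - f y"
    unfolding eventually_at_right_field
  proof (intro exI[of _ 1] conjI allI impI)
    fix s :: real assume s: "s > 0" "s < 1"
    have "\<phi> s = f ((1 - s) *\<^sub>R y + s *\<^sub>R z)" unfolding \<phi>_def by (simp add: algebra_simps)
    also have "\<dots> \<le> (1 - s) * f y + s * f z"
      using s by (intro convex_onD[OF cf]) auto
    finally have "\<phi> s - \<phi> 0 \<le> s * (f z - f y)" by (simp add: \<phi>_def algebra_simps)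
    then show "(\<phi> s - \<phi> 0) / (s - 0) \<le> f z - f y" using s by (simp add: field_simps)
  qed simp
  have "inner g (z - y) \<le> f z - f y"
    by (rule tendsto_upperbound[OF lim ev]) simp
  then show ?thesis by simp
qed

lemma deriv_inner_scaled:
  fixes x :: "real \<Rightarrow> 'a::real_inner"
  assumes dx: "(x has_vector_derivative x') (at s within S)"
    and d\<phi>: "(\<phi> has_real_derivative \<phi>') (at s within S)"
  shows "((\<lambda>s. inner w (\<phi> s *\<^sub>R (x s - z))) has_vector_derivative
            inner w (\<phi> s *\<^sub>R x' + \<phi>' *\<^sub>R (x s - z))) (at s within S)"
proof -
  have "((\<lambda>s. x s - z) has_vector_derivative x' - 0) (at s within S)"
    by (intro has_vector_derivative_diff dx has_vector_derivative_const)
  then have d: "((\<lambda>s. \<phi> s *\<^sub>R (x s - z)) has_vector_derivative (\<phi> s *\<^sub>R x' + \<phi>' *\<^sub>R (x s - z))) (at s within S)"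
    using has_vector_derivative_scaleR[OF d\<phi>] by simp
  show ?thesis
    using has_derivative_inner_right[OF d[unfolded has_vector_derivative_def], of w]
    by (simp add: has_vector_derivative_def)
qed

lemma ac_sub:
  fixes \<phi> P :: "real \<Rightarrow> real"
  assumes h: "\<And>T. t0 \<le> T \<Longrightarrow> T \<le> t1 \<Longrightarrow> (\<phi> has_integral (P T - P t0)) {t0..T}"
    and ST: "t0 \<le> S" "S \<le> T" "T \<le> t1"
  shows "(\<phi> has_integral (P T - P S)) {S..T}"
proof -
  have hT: "(\<phi> has_integral (P T - P t0)) {t0..T}" using h ST by auto
  have hS: "(\<phi> has_integral (P S - P t0)) {t0..S}" using h ST by auto
  have iT: "\<phi> integrable_on {t0..T}" using hT by blast
  have "\<phi> integrable_on {S..T}" using iT ST by (auto intro: integrable_subinterval_real)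
  then have i2: "(\<phi> has_integral integral {S..T} \<phi>) {S..T}" by (simp add: has_integral_integral)
  have "integral {t0..S} \<phi> + integral {S..T} \<phi> = integral {t0..T} \<phi>"
    by (rule Henstock_Kurzweil_Integration.integral_combine) (use iT ST in auto)
  then have "integral {S..T} \<phi> = P T - P S"
    using integral_unique[OF hT] integral_unique[OF hS] by simp
  with i2 show ?thesis by simp
qed

lemma integral_le_ae:
  fixes f g :: "real \<Rightarrow> real"
  assumes f: "f integrable_on S" and g: "g integrable_on S" and N: "negligible N"
    and le: "\<And>s. s \<in> S - N \<Longrightarrow> f s \<le> g s"
  shows "integral S f \<le> integral S g"
proof -
  define f' where "f' s = (if s \<in> N then g s else f s)" for s
  have "(f' has_integral integral S f) S"
    by (rule has_integral_spike[OF N _ integrable_integral[OF f]]) (auto simp: f'_def)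
  moreover have "\<And>s. s \<in> S \<Longrightarrow> f' s \<le> g s" using le by (auto simp: f'_def)
  ultimately show ?thesis using has_integral_le[OF _ integrable_integral[OF g]] by blast
qed

lemma theta_comb_integrable:
  fixes \<theta> :: "real \<Rightarrow> nat \<Rightarrow> real" and c :: "nat \<Rightarrow> real \<Rightarrow> real"
  assumes meas: "\<And>i. i < m \<Longrightarrow> (\<lambda>s. \<theta> s i) \<in> borel_measurable (lebesgue_on {t0..})"
    and bd: "\<And>s i. s \<ge> t0 \<Longrightarrow> i < m \<Longrightarrow> \<bar>\<theta> s i\<bar> \<le> 1"
    and cc: "\<And>i. i < m \<Longrightarrow> continuous_on {t0..t} (c i)"
  shows "(\<lambda>s. \<Sum>i<m. \<theta> s i * c i s) integrable_on {t0..t}"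
proof (rule integrable_sum)
  fix i assume "i \<in> {..<m}"
  then have i: "i < m" by simp
  have m1: "(\<lambda>s. \<theta> s i) \<in> borel_measurable (lebesgue_on {t0..t})"
    by (rule measurable_restrict_mono[OF meas[OF i]]) auto
  have m2: "c i \<in> borel_measurable (lebesgue_on {t0..t})"
    by (rule continuous_imp_measurable_on_sets_lebesgue[OF cc[OF i]]) simp
  have mm: "(\<lambda>s. \<theta> s i * c i s) \<in> borel_measurable (lebesgue_on {t0..t})"
    using m1 m2 by (rule borel_measurable_times)
  have "compact (c i ` {t0..t})" by (rule compact_continuous_image[OF cc[OF i]]) simp
  then obtain B where B: "\<forall>y\<in>c i ` {t0..t}. norm y \<le> B" using compact_imp_bounded bounded_iff by metis
  show "(\<lambda>s. \<theta> s i * c i s) integrable_on {t0..t}"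
  proof (rule measurable_bounded_by_integrable_imp_integrable_real[OF mm])
    show "(\<lambda>s. B) integrable_on {t0..t}" by (intro integrable_continuous_real continuous_on_const)
    fix s assume s: "s \<in> {t0..t}"
    have "\<bar>\<theta> s i * c i s\<bar> = \<bar>\<theta> s i\<bar> * \<bar>c i s\<bar>" by (simp add: abs_mult)
    also have "\<dots> \<le> 1 * B" using bd[of s i] B s i by (intro mult_mono) auto
    finally show "\<bar>\<theta> s i * c i s\<bar> \<le> B" by simp
  qed simp
qed simp

lemma AE_negligible:
  assumes "AE s in lborel. P s"
  obtains N where "negligible N" "\<And>s. s \<notin> N \<Longrightarrow> P s"
proof -
  from assms obtain N where N: "{s \<in> space lborel. \<not> P s} \<subseteq> N" "emeasure lborel N = 0" "N \<in> sets lborel"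
    by (rule AE_E)
  have "N \<in> null_sets lborel" using N by (intro null_setsI)
  then have "negligible N" unfolding negligible_iff_null_sets by (rule null_sets_completionI)
  then show ?thesis using that N(1) by auto
qed


lemma lin1:
  fixes q U A D :: real
  assumes "q = 1/2 * (U - A) + D" "U \<ge> 0" "D \<ge> 0" shows "- (1/2) * A \<le> q"
  using assms by (simp add: field_simps)

theorem lemma4p5:
  fixes f :: "nat \<Rightarrow> 'a::{real_inner,complete_space} \<Rightarrow> real"
    and g :: "nat \<Rightarrow> 'a \<Rightarrow> 'a"
    and m :: nat and \<alpha> t0 :: real and x0 z :: 'a
    and x x' x'' :: "real \<Rightarrow> 'a"
    and \<theta> :: "real \<Rightarrow> nat \<Rightarrow> real"
  assumes conv: "\<And>i. i < m \<Longrightarrow> convex_on UNIV (f i)"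
    and grad: "\<And>i y. i < m \<Longrightarrow> (f i has_derivative (\<lambda>h. inner (g i y) h)) (at y)"
    and grad_cont: "\<And>i. i < m \<Longrightarrow> continuous_on UNIV (g i)"
    and \<alpha>_pos: "\<alpha> > 0" and t0_pos: "t0 > 0"
    and x_deriv: "\<And>t. t \<ge> t0 \<Longrightarrow> (x has_vector_derivative x' t) (at t within {t0..})"
    and x'_cont: "continuous_on {t0..} x'"
    and x''_int: "\<And>T. T \<ge> t0 \<Longrightarrow> x'' integrable_on {t0..T} \<and> (\<lambda>s. norm (x'' s)) integrable_on {t0..T}"
    and x'_eq: "\<And>t. t \<ge> t0 \<Longrightarrow> (x'' has_integral (x' t - x' t0)) {t0..t}"
    and x''_deriv: "AE t in lborel. t \<ge> t0 \<longrightarrow> (x' has_vector_derivative x'' t) (at t within {t0..})"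
    and eqn: "AE t in lborel. t > t0 \<longrightarrow>
       (\<alpha> / t) *\<^sub>R x' t + proj ((\<lambda>c. c + x'' t) ` (convex hull {g i (x t) | i. i < m})) 0 = 0"
    and init: "x t0 = x0" "x' t0 = 0"
    and \<theta>_simplex: "\<And>t. t \<ge> t0 \<Longrightarrow> \<theta> t \<in> prob_simplex m"
    and \<theta>_meas: "\<And>i. i < m \<Longrightarrow> (\<lambda>t. \<theta> t i) \<in> borel_measurable (lebesgue_on {t0..})"
    and \<theta>_proj: "\<And>t. t \<ge> t0 \<Longrightarrow>
       proj ((\<lambda>c. c + x'' t) ` (convex hull {g i (x t) | i. i < m})) 0
         = (\<Sum>i<m. \<theta> t i *\<^sub>R g i (x t)) + x'' t"
  defines "W \<equiv> (\<lambda>i t. f i (x t) + (1/2) * (norm (x' t))\<^sup>2)"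
    and "h \<equiv> (\<lambda>t. (1/2) * (norm (x t - z))\<^sup>2)"
    and "h' \<equiv> (\<lambda>t. inner (x t - z) (x' t))"
    and "Cz \<equiv> (\<alpha> + 1) * (1 / t0\<^sup>2) * ((1/2) * (norm (x t0 - z))\<^sup>2)
              + 3 / (2 * \<alpha>) * (MAX i\<in>{..<m}. f i x0 - f i z)"
  shows "\<forall>t\<ge>t0.
     integral {t0..t} (\<lambda>s. (1 / s) * (\<Sum>i<m. \<theta> s i * (W i s - f i z)))
     + 3 / (2 * \<alpha>) * (\<Sum>i<m. \<theta> t i * (W i t - f i z))
     \<le> Cz - (1 / t) * h' t"
proof (intro allI impI)
  fix t assume tt: "t0 \<le> t"
  define G where "G s = (\<Sum>i<m. \<theta> s i *\<^sub>R g i (x s))" for s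
  have m0: "m > 0"
  proof (rule ccontr)
    assume "\<not> m > 0"
    then have "m = 0" by simp
    with \<theta>_simplex[of t0] show False by (simp add: prob_simplex_def)
  qed
  have \<theta>nn: "\<And>s i. t0 \<le> s \<Longrightarrow> i < m \<Longrightarrow> \<theta> s i \<ge> 0"
    using \<theta>_simplex by (simp add: prob_simplex_def)
  have \<theta>sum: "\<And>s. t0 \<le> s \<Longrightarrow> (\<Sum>i<m. \<theta> s i) = 1"
    using \<theta>_simplex by (simp add: prob_simplex_def)
  have \<theta>le: "\<theta> s i \<le> 1" if s: "t0 \<le> s" and i: "i < m" for s i
  proof -
    have "\<theta> s i \<le> (\<Sum>j<m. \<theta> s j)" by (rule member_le_sum) (use \<theta>nn s i in auto)
    then show "\<theta> s i \<le> 1" using \<theta>sum s by simp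
  qed
  have \<theta>abs: "\<And>s i. t0 \<le> s \<Longrightarrow> i < m \<Longrightarrow> \<bar>\<theta> s i\<bar> \<le> 1"
    using \<theta>nn \<theta>le by (metis abs_of_nonneg)
  have tcomb: "(\<lambda>s. \<Sum>i<m. \<theta> s i * c i s) integrable_on {t0..t}"
    if "\<And>i. i < m \<Longrightarrow> continuous_on {t0..t} (c i)" for c
    using theta_comb_integrable[OF \<theta>_meas \<theta>abs that] by simp
  have xc: "continuous_on {t0..} x"
    unfolding continuous_on_eq_continuous_within
    using x_deriv has_vector_derivative_continuous by fastforce
  have xct: "continuous_on {t0..t} x" by (rule continuous_on_subset[OF xc]) auto
  have vct: "continuous_on {t0..t} x'" by (rule continuous_on_subset[OF x'_cont]) auto
  have fc: "continuous_on UNIV (f i)" if i: "i < m" for i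
    by (rule has_derivative_continuous_on) (use grad[OF i] in auto)
  have gct: "continuous_on {t0..t} (\<lambda>s. g i (x s))" if i: "i < m" for i
    using continuous_on_compose2[OF grad_cont[OF i] xct] by auto
  have fct: "continuous_on {t0..t} (\<lambda>s. f i (x s))" if i: "i < m" for i
    using continuous_on_compose2[OF fc[OF i] xct] by auto
  have dx: "(x has_vector_derivative x' s) (at s within S)" if "t0 \<le> s" "S \<subseteq> {t0..}" for s S
    by (rule has_vector_derivative_within_subset[OF x_deriv[OF that(1)] that(2)])
  define Pq where "Pq s \<longleftrightarrow> (s > t0 \<longrightarrow>
       (\<alpha> / s) *\<^sub>R x' s + proj ((\<lambda>c. c + x'' s) ` (convex hull {g i (x s) | i. i < m})) 0 = 0)" for s
  have aeP: "AE s in lborel. Pq s" using eqn unfolding Pq_def .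
  obtain N where negN: "negligible N" and NN0: "\<And>s. s \<notin> N \<Longrightarrow> Pq s"
    using AE_negligible[OF aeP] by blast
  have NN: "(\<alpha> / s) *\<^sub>R x' s + proj ((\<lambda>c. c + x'' s) ` (convex hull {g i (x s) | i. i < m})) 0 = 0"
    if "s \<notin> N" "s > t0" for s
    using NN0[OF that(1)] that(2) unfolding Pq_def by blast
  define Nn where "Nn = N \<union> {t0}"
  have negNn: "negligible Nn" unfolding Nn_def by (intro negligible_Un negN negligible_sing)
  have pe: "proj ((\<lambda>c. c + x'' s) ` (convex hull {g i (x s) | i. i < m})) 0 = G s + x'' s"
    if "t0 \<le> s" for s
    using \<theta>_proj[OF that] unfolding G_def by simp
  have ode: "x'' s = - ((\<alpha>/s) *\<^sub>R x' s) - G s" if s: "s \<in> {t0..t} - Nn" for s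
  proof -
    have "s > t0" "s \<notin> N" using s by (auto simp: Nn_def)
    then have "(\<alpha> / s) *\<^sub>R x' s + (G s + x'' s) = 0" using NN[of s] pe[of s] by simp
    then have eq: "(\<alpha> / s) *\<^sub>R x' s + (G s + x'' s) = 0" .
    have "x'' s = ((\<alpha> / s) *\<^sub>R x' s + (G s + x'' s)) - (\<alpha> / s) *\<^sub>R x' s - G s" by simp
    also have "\<dots> = - ((\<alpha>/s) *\<^sub>R x' s) - G s" unfolding eq by simp
    finally show ?thesis .
  qed
  have vi: "inner (x' s) (g i (x s)) \<le> inner (x' s) (G s)" if s: "s \<in> {t0..t} - Nn" and i: "i < m" for s i
  proof -
    define S where "S = {g i (x s) | i. i < m}"
    define K where "K = (\<lambda>c. c + x'' s) ` (convex hull S)"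
    have s0: "s > 0" "t0 \<le> s" using s t0_pos by auto
    have fin: "finite S" unfolding S_def by (rule finite_image_set) simp
    have tr: "(\<lambda>c. c + x'' s) = (+) (x'' s)" by (auto simp: fun_eq_iff)
    have cK: "compact K" unfolding K_def tr
      by (intro compact_translation finite_imp_compact_convex_hull fin)
    have vK: "convex K" unfolding K_def tr by (intro convex_translation convex_convex_hull)
    have gi: "g i (x s) \<in> S" unfolding S_def using i by blast
    have ci: "g i (x s) + x'' s \<in> K" unfolding K_def using hull_inc[OF gi] by blast
    then have nK: "K \<noteq> {}" by blast
    have pK: "proj K 0 = G s + x'' s" unfolding K_def S_def using pe[OF s0(2)] by simp
    have pK2: "G s + x'' s = - ((\<alpha>/s) *\<^sub>R x' s)" using ode[OF s] by simp
    have "0 \<le> inner (proj K 0) ((g i (x s) + x'' s) - proj K 0)"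
      using proj_vi[OF cK vK nK] ci by blast
    also have "\<dots> = inner (- ((\<alpha>/s) *\<^sub>R x' s)) (g i (x s) - G s)"
    proof -
      have a1: "(g i (x s) + x'' s) - proj K 0 = g i (x s) - G s" unfolding pK by simp
      have a2: "proj K 0 = - ((\<alpha>/s) *\<^sub>R x' s)" using pK pK2 by simp
      show ?thesis by (subst a1, subst a2, rule refl)
    qed
    also have "\<dots> = - (\<alpha>/s) * (inner (x' s) (g i (x s)) - inner (x' s) (G s))"
      by (simp add: inner_diff_right algebra_simps)
    finally have le: "(\<alpha>/s) * (inner (x' s) (g i (x s)) - inner (x' s) (G s)) \<le> 0" by simp
    have pos: "\<alpha>/s > 0" using \<alpha>_pos s0 by simp
    show ?thesis
    proof (rule ccontr)
      assume "\<not> ?thesis"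
      then have "inner (x' s) (g i (x s)) - inner (x' s) (G s) > 0" by simp
      from mult_pos_pos[OF pos this] le show False by linarith
    qed
  qed
  have iua: "(\<lambda>s. inner (u s) (x'' s)) integrable_on {t0..t}" if cu: "continuous_on {t0..t} u" for u
  proof -
    have i1: "(\<lambda>s. - (\<alpha>/s) * inner (u s) (x' s) - (\<Sum>i<m. \<theta> s i * inner (u s) (g i (x s)))) integrable_on {t0..t}"
      using t0_pos
      by (intro integrable_diff integrable_continuous_real tcomb continuous_intros cu vct gct) auto
    show ?thesis
    proof (rule integrable_spike[OF i1 negNn])
      fix s assume s: "s \<in> {t0..t} - Nn"
      show "inner (u s) (x'' s) = - (\<alpha>/s) * inner (u s) (x' s) - (\<Sum>i<m. \<theta> s i * inner (u s) (g i (x s)))"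
        unfolding ode[OF s] G_def by (simp add: inner_diff_right inner_sum_right)
    qed
  qed
  have ha: "((\<lambda>s. inner w (x'' s)) has_integral inner w (x' T - x' S)) {S..T}"
    if ST: "t0 \<le> S" "S \<le> T" "T \<le> t" for w S T
  proof -
    have "((\<lambda>s. inner w (x'' s)) has_integral (inner w (x' T') - inner w (x' t0))) {t0..T'}"
      if "t0 \<le> T'" "T' \<le> t" for T'
      using has_integral_linear[OF x'_eq[OF that(1)] bounded_linear_inner_right[of w]]
      by (simp add: o_def inner_diff_right)
    from ac_sub[OF this ST] show ?thesis by (simp add: inner_diff_right)
  qed
  have na: "(\<lambda>s. norm (x'' s)) integrable_on {t0..t}" using x''_int tt by blast
  have E: "((\<lambda>s. inner (x' s) (x'' s)) has_integral (1/2) * (norm (x' t))\<^sup>2) {t0..t}"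
  proof -
    have ib: "(\<lambda>s. inner (x'' s) (x' s)) integrable_on {t0..t}"
      using iua[OF vct] by (simp add: inner_commute)
    have pr: "((\<lambda>s. inner (x'' s) (x' s) + inner (x' s) (x'' s)) has_integral
        (inner (x' t) (x' t) - inner (x' t0) (x' t0))) {t0..t}"
      by (rule product_rule_ac[OF tt vct vct ha ha na na ib iua[OF vct]])
    have "((\<lambda>s. (1/2) * (inner (x'' s) (x' s) + inner (x' s) (x'' s))) has_integral
        (1/2) * (inner (x' t) (x' t) - inner (x' t0) (x' t0))) {t0..t}"
      by (rule has_integral_mult_right[OF pr])
    moreover have "(\<lambda>s. (1/2) * (inner (x'' s) (x' s) + inner (x' s) (x'' s))) = (\<lambda>s. inner (x' s) (x'' s))"
      by (auto simp: fun_eq_iff inner_commute)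
    ultimately show ?thesis by (simp add: init power2_norm_eq_inner)
  qed
  have Fi: "((\<lambda>s. inner (g i (x s)) (x' s)) has_integral (f i (x t) - f i (x t0))) {t0..t}"
    if i: "i < m" for i
  proof (rule fundamental_theorem_of_calculus[OF tt])
    fix s assume s: "s \<in> {t0..t}"
    have d1: "(x has_vector_derivative x' s) (at s within {t0..t})" using dx s by auto
    have d2: "(f i has_derivative (\<lambda>h. inner (g i (x s)) h)) (at (x s) within x ` {t0..t})"
      by (rule has_derivative_subset[OF grad[OF i] subset_UNIV])
    show "((\<lambda>s. f i (x s)) has_vector_derivative inner (g i (x s)) (x' s)) (at s within {t0..t})"
      using vector_derivative_diff_chain_within[OF d1 d2] by (simp add: o_def)
  qed
  define J where "J = integral {t0..t} (\<lambda>s. (norm (x' s))\<^sup>2 / s)"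
  have Rint: "(\<lambda>s. (norm (x' s))\<^sup>2 / s) integrable_on {t0..t}"
    using t0_pos by (intro integrable_continuous_real continuous_intros vct) auto
  have energy: "f i (x t) - f i x0 + (1/2) * (norm (x' t))\<^sup>2 \<le> - \<alpha> * J" if i: "i < m" for i
  proof -
    have h1: "((\<lambda>s. inner (g i (x s)) (x' s) + inner (x' s) (x'' s)) has_integral
        (f i (x t) - f i x0 + (1/2) * (norm (x' t))\<^sup>2)) {t0..t}"
      using has_integral_add[OF Fi[OF i] E] init by simp
    have i2: "(\<lambda>s. - \<alpha> * ((norm (x' s))\<^sup>2 / s)) integrable_on {t0..t}"
      using Rint by (metis integrable_on_mult_right)
    have "integral {t0..t} (\<lambda>s. inner (g i (x s)) (x' s) + inner (x' s) (x'' s))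
        \<le> integral {t0..t} (\<lambda>s. - \<alpha> * ((norm (x' s))\<^sup>2 / s))"
    proof (rule integral_le_ae[OF has_integral_integrable[OF h1] i2 negNn])
      fix s assume s: "s \<in> {t0..t} - Nn"
      have "inner (x' s) (x'' s) = - (\<alpha>/s) * (norm (x' s))\<^sup>2 - inner (x' s) (G s)"
        unfolding ode[OF s] by (simp add: inner_diff_right power2_norm_eq_inner)
      moreover have "inner (g i (x s)) (x' s) \<le> inner (x' s) (G s)"
        using vi[OF s i] by (simp add: inner_commute)
      ultimately show "inner (g i (x s)) (x' s) + inner (x' s) (x'' s) \<le> - \<alpha> * ((norm (x' s))\<^sup>2 / s)"
        by simp
    qed
    also have "\<dots> = - \<alpha> * J" unfolding J_def by (rule integral_mult_right)
    finally show ?thesis using integral_unique[OF h1] by simp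
  qed
  have dinv: "((\<lambda>s. 1/s) has_real_derivative (-1/s\<^sup>2)) (at s within S)" if "s > 0" for s :: real and S
    using that by (auto intro!: derivative_eq_intros simp: power2_eq_square field_simps)
  have dinv2: "((\<lambda>s. 1/s\<^sup>2) has_real_derivative (-2/s^3)) (at s within S)" if "s > 0" for s :: real and S
    using that by (auto intro!: derivative_eq_intros simp: power2_eq_square power3_eq_cube field_simps)
  have hbgen: "((\<lambda>s. inner w (\<phi> s *\<^sub>R x' s + \<phi>' s *\<^sub>R (x s - z))) has_integral
      (inner w (\<phi> T *\<^sub>R (x T - z)) - inner w (\<phi> S *\<^sub>R (x S - z)))) {S..T}"
    if ST: "t0 \<le> S" "S \<le> T"
      and d\<phi>: "\<And>s. t0 \<le> s \<Longrightarrow> (\<phi> has_real_derivative \<phi>' s) (at s within {S..T})"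
    for w S T and \<phi> \<phi>' :: "real \<Rightarrow> real"
  proof -
    have "((\<lambda>s. inner w (\<phi> s *\<^sub>R x' s + \<phi>' s *\<^sub>R (x s - z))) has_integral
      ((\<lambda>s. inner w (\<phi> s *\<^sub>R (x s - z))) T - (\<lambda>s. inner w (\<phi> s *\<^sub>R (x s - z))) S)) {S..T}"
    proof (rule fundamental_theorem_of_calculus[OF ST(2)])
      fix s assume s: "s \<in> {S..T}"
      have s0: "t0 \<le> s" using s ST by auto
      show "((\<lambda>s. inner w (\<phi> s *\<^sub>R (x s - z))) has_vector_derivative
          inner w (\<phi> s *\<^sub>R x' s + \<phi>' s *\<^sub>R (x s - z))) (at s within {S..T})"
        by (rule deriv_inner_scaled[OF dx[OF s0] d\<phi>[OF s0]]) (use ST in auto)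
    qed
    then show ?thesis by simp
  qed
  define u where "u s = (1/s) *\<^sub>R (x s - z)" for s
  define b where "b s = (1/s) *\<^sub>R x' s + (-1/s\<^sup>2) *\<^sub>R (x s - z)" for s
  have hbH: "((\<lambda>s. inner w (b s)) has_integral inner w (u T - u S)) {S..T}"
    if ST: "t0 \<le> S" "S \<le> T" "T \<le> t" for w S T
    using hbgen[OF ST(1,2), of "\<lambda>s. 1/s" "\<lambda>s. -1/s\<^sup>2" w] dinv t0_pos
    by (simp add: u_def b_def inner_diff_right)
  have uc: "continuous_on {t0..t} u" unfolding u_def using t0_pos
    by (intro continuous_intros xct) auto
  have bc: "continuous_on {t0..t} b" unfolding b_def using t0_pos
    by (intro continuous_intros xct vct) auto
  have nb: "(\<lambda>s. norm (b s)) integrable_on {t0..t}"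
    by (intro integrable_continuous_real continuous_intros bc)
  have ib: "(\<lambda>s. inner (b s) (x' s)) integrable_on {t0..t}"
    by (intro integrable_continuous_real continuous_intros bc vct)
  have HH: "((\<lambda>s. inner (b s) (x' s) + inner (u s) (x'' s)) has_integral
      (inner (u t) (x' t) - inner (u t0) (x' t0))) {t0..t}"
    by (rule product_rule_ac[OF tt uc vct hbH ha nb na ib iua[OF uc]])
  define u2 where "u2 s = (1/s\<^sup>2) *\<^sub>R (x s - z)" for s
  define b2 where "b2 s = (1/s\<^sup>2) *\<^sub>R x' s + (-2/s^3) *\<^sub>R (x s - z)" for s
  define v2 where "v2 s = x s - z" for s
  have hb2: "((\<lambda>s. inner w (b2 s)) has_integral inner w (u2 T - u2 S)) {S..T}"
    if ST: "t0 \<le> S" "S \<le> T" "T \<le> t" for w S T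
    using hbgen[OF ST(1,2), of "\<lambda>s. 1/s\<^sup>2" "\<lambda>s. -2/s^3" w] dinv2 t0_pos
    by (simp add: u2_def b2_def inner_diff_right)
  have ha2: "((\<lambda>s. inner w (x' s)) has_integral inner w (v2 T - v2 S)) {S..T}"
    if ST: "t0 \<le> S" "S \<le> T" "T \<le> t" for w S T
    using hbgen[OF ST(1,2), of "\<lambda>s. 1" "\<lambda>s. 0" w]
    by (simp add: v2_def inner_diff_right)
  have u2c: "continuous_on {t0..t} u2" unfolding u2_def using t0_pos
    by (intro continuous_intros xct) auto
  have b2c: "continuous_on {t0..t} b2" unfolding b2_def using t0_pos
    by (intro continuous_intros xct vct) auto
  have v2c: "continuous_on {t0..t} v2" unfolding v2_def
    by (intro continuous_intros xct)
  have QQ: "((\<lambda>s. inner (b2 s) (v2 s) + inner (u2 s) (x' s)) has_integral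
      (inner (u2 t) (v2 t) - inner (u2 t0) (v2 t0))) {t0..t}"
  proof (rule product_rule_ac[OF tt u2c v2c hb2 ha2])
    show "(\<lambda>s. norm (b2 s)) integrable_on {t0..t}"
      by (intro integrable_continuous_real continuous_intros b2c)
    show "(\<lambda>s. norm (x' s)) integrable_on {t0..t}"
      by (intro integrable_continuous_real continuous_intros vct)
    show "(\<lambda>s. inner (b2 s) (v2 s)) integrable_on {t0..t}"
      by (intro integrable_continuous_real continuous_intros b2c v2c)
    show "(\<lambda>s. inner (u2 s) (x' s)) integrable_on {t0..t}"
      by (intro integrable_continuous_real continuous_intros u2c vct)
  qed
  define Q where "Q s = inner (x s - z) (x' s) / s\<^sup>2" for s
  define Dq where "Dq s = (norm (x s - z))\<^sup>2 / s^3" for s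
  have Dqint: "Dq integrable_on {t0..t}" unfolding Dq_def using t0_pos
    by (intro integrable_continuous_real continuous_intros xct) auto
  have Dqnn: "integral {t0..t} Dq \<ge> 0"
    by (rule integral_nonneg[OF Dqint]) (use t0_pos in \<open>auto simp: Dq_def\<close>)
  have Qhas: "(Q has_integral ((1/2) * (inner (u2 t) (v2 t) - inner (u2 t0) (v2 t0)) + integral {t0..t} Dq)) {t0..t}"
  proof -
    have "((\<lambda>s. (1/2) * (inner (b2 s) (v2 s) + inner (u2 s) (x' s)) + Dq s) has_integral
        ((1/2) * (inner (u2 t) (v2 t) - inner (u2 t0) (v2 t0)) + integral {t0..t} Dq)) {t0..t}"
      by (intro has_integral_add has_integral_mult_right QQ integrable_integral Dqint)
    then show ?thesis
    proof (rule has_integral_eq[rotated])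
      fix s assume s: "s \<in> {t0..t}"
      then have s0: "s > 0" using t0_pos by auto
      define P where "P = inner (x s - z) (x' s)"
      define n where "n = (norm (x s - z))\<^sup>2"
      have e1: "inner (b2 s) (v2 s) = (1/s\<^sup>2) * P + (-2/s^3) * n"
        unfolding b2_def v2_def P_def n_def
        by (simp add: inner_add_left inner_add_right inner_diff_right power2_norm_eq_inner inner_commute)
      have e2: "inner (u2 s) (x' s) = (1/s\<^sup>2) * P"
        unfolding u2_def P_def by simp
      have e3: "Dq s = n / s^3" "Q s = P / s\<^sup>2" unfolding Dq_def n_def Q_def P_def by simp_all
      show "(1/2) * (inner (b2 s) (v2 s) + inner (u2 s) (x' s)) + Dq s = Q s"
        unfolding e1 e2 e3 using s0 by (simp add: field_simps power2_eq_square power3_eq_cube)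
    qed
  qed
  have IQge: "integral {t0..t} Q \<ge> - (1/2) * ((1/t0\<^sup>2) * (norm (x t0 - z))\<^sup>2)"
  proof -
    have U: "inner (u2 t) (v2 t) \<ge> 0" unfolding u2_def v2_def by simp
    have e0: "inner (u2 t0) (v2 t0) = (1/t0\<^sup>2) * (norm (x t0 - z))\<^sup>2"
      unfolding u2_def v2_def by (simp add: power2_norm_eq_inner)
    have "integral {t0..t} Q = (1/2) * (inner (u2 t) (v2 t) - inner (u2 t0) (v2 t0)) + integral {t0..t} Dq"
      by (rule integral_unique[OF Qhas])
    then have "integral {t0..t} Q = (1/2) * (inner (u2 t) (v2 t) - (1/t0\<^sup>2) * (norm (x t0 - z))\<^sup>2) + integral {t0..t} Dq"
      unfolding e0 .
    then show ?thesis by (rule lin1[OF _ U Dqnn])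
  qed
  define L where "L = (\<lambda>s. (1 / s) * (\<Sum>i<m. \<theta> s i * (W i s - f i z)))"
  have Lint: "L integrable_on {t0..t}"
  proof -
    have "(\<lambda>s. \<Sum>i<m. \<theta> s i * ((W i s - f i z) / s)) integrable_on {t0..t}"
    proof (rule tcomb)
      fix i assume i: "i < m"
      show "continuous_on {t0..t} (\<lambda>s. (W i s - f i z) / s)"
        unfolding W_def using t0_pos by (intro continuous_intros fct[OF i] vct) auto
    qed
    moreover have "(\<lambda>s. \<Sum>i<m. \<theta> s i * ((W i s - f i z) / s)) = L"
      unfolding L_def by (auto simp: fun_eq_iff sum_distrib_left)
    ultimately show ?thesis by simp
  qed
  define Rf where "Rf s = (3/2) * ((norm (x' s))\<^sup>2 / s) - (\<alpha> + 1) * Q s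
      - (inner (b s) (x' s) + inner (u s) (x'' s))" for s
  have Qint: "Q integrable_on {t0..t}" using Qhas by blast
  have Rhas: "(Rf has_integral ((3/2) * J - (\<alpha> + 1) * integral {t0..t} Q
      - (inner (u t) (x' t) - inner (u t0) (x' t0)))) {t0..t}"
    unfolding Rf_def J_def
    by (intro has_integral_diff has_integral_mult_left has_integral_mult_right
        integrable_integral Rint Qint HH)
  have ptw: "L s \<le> Rf s" if s: "s \<in> {t0..t} - Nn" for s
  proof -
    have s0: "s > 0" "t0 \<le> s" using s t0_pos by auto
    define P where "P = inner (x s - z) (x' s)"
    define n where "n = (norm (x' s))\<^sup>2"
    define Sg where "Sg = (\<Sum>i<m. \<theta> s i * inner (x s - z) (g i (x s)))"
    define Sf where "Sf = (\<Sum>i<m. \<theta> s i * (f i (x s) - f i z))"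
    have conv_s: "Sf \<le> Sg" unfolding Sf_def Sg_def
    proof (rule sum_mono)
      fix i assume "i \<in> {..<m}"
      then have i: "i < m" by simp
      have "f i z \<ge> f i (x s) + inner (g i (x s)) (z - x s)"
        by (rule convex_grad_ineq[OF conv[OF i] grad[OF i]])
      then have "f i (x s) - f i z \<le> inner (x s - z) (g i (x s))"
        by (simp add: inner_diff_right inner_diff_left inner_commute)
      then show "\<theta> s i * (f i (x s) - f i z) \<le> \<theta> s i * inner (x s - z) (g i (x s))"
        by (rule mult_left_mono) (use \<theta>nn[OF s0(2) i] in simp)
    qed
    have sumW: "(\<Sum>i<m. \<theta> s i * (W i s - f i z)) = Sf + (\<Sum>i<m. \<theta> s i) * ((1/2) * n)"
      unfolding Sf_def W_def n_def sum_distrib_right sum.distrib[symmetric]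
      by (rule sum.cong) (auto simp: algebra_simps)
    have Lform: "L s = (1/s) * (Sf + (1/2) * n)"
      unfolding L_def sumW using \<theta>sum[OF s0(2)] by simp
    have ib_s: "inner (b s) (x' s) = (1/s) * n - (1/s\<^sup>2) * P"
      unfolding b_def n_def P_def
      by (simp add: inner_add_left inner_add_right inner_diff_right power2_norm_eq_inner inner_commute)
    have iu1: "inner (x s - z) (x'' s) = - (\<alpha>/s) * P - Sg"
      unfolding ode[OF s] G_def P_def Sg_def
      by (simp add: inner_diff_right inner_sum_right)
    have iu_s: "inner (u s) (x'' s) = (1/s) * (- (\<alpha>/s) * P - Sg)"
      unfolding u_def inner_scaleR_left iu1 ..
    have Q_s: "Q s = P / s\<^sup>2" unfolding Q_def P_def ..
    have Rform: "Rf s = (1/s) * (Sg + (1/2) * n)"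
      unfolding Rf_def ib_s iu_s Q_s n_def[symmetric]
      using s0 by (simp add: field_simps power2_eq_square)
    show ?thesis unfolding Lform Rform
      using conv_s s0 by (intro mult_left_mono) auto
  qed
  define IL where "IL = integral {t0..t} L"
  have A1: "IL \<le> (3/2) * J - (\<alpha> + 1) * integral {t0..t} Q - (1/t) * h' t"
  proof -
    have "IL \<le> integral {t0..t} Rf"
      unfolding IL_def by (rule integral_le_ae[OF Lint has_integral_integrable[OF Rhas] negNn ptw])
    also have "\<dots> = (3/2) * J - (\<alpha> + 1) * integral {t0..t} Q - (inner (u t) (x' t) - inner (u t0) (x' t0))"
      by (rule integral_unique[OF Rhas])
    also have "inner (u t) (x' t) - inner (u t0) (x' t0) = (1/t) * h' t"
      unfolding u_def h'_def by (simp add: init)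
    finally show ?thesis .
  qed
  define c where "c = 3 / (2 * \<alpha>)"
  define Mx where "Mx = (MAX i\<in>{..<m}. f i x0 - f i z)"
  have Cz_eq: "Cz = (\<alpha> + 1) * (1 / t0\<^sup>2) * ((1/2) * (norm (x t0 - z))\<^sup>2) + c * Mx"
    unfolding Cz_def c_def Mx_def ..
  have cpos: "c > 0" unfolding c_def using \<alpha>_pos by simp
  have each: "IL + c * (W i t - f i z) \<le> Cz - (1/t) * h' t" if i: "i < m" for i
  proof -
    have A2: "(\<alpha> + 1) * (- integral {t0..t} Q) \<le> (\<alpha> + 1) * ((1/2) * ((1/t0\<^sup>2) * (norm (x t0 - z))\<^sup>2))"
      by (rule mult_left_mono) (use IQge \<alpha>_pos in auto)
    have A3: "\<alpha> * J \<le> f i x0 - W i t" using energy[OF i] unfolding W_def by simp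
    have A3': "(3/2) * J = c * (\<alpha> * J)" unfolding c_def using \<alpha>_pos by simp
    have A3'': "c * (\<alpha> * J) \<le> c * (f i x0 - W i t)" by (rule mult_left_mono[OF A3]) (use cpos in simp)
    have A4: "f i x0 - f i z \<le> Mx" unfolding Mx_def by (rule Max_ge) (use i in auto)
    have A4': "c * (f i x0 - f i z) \<le> c * Mx" by (rule mult_left_mono[OF A4]) (use cpos in simp)
    have eq: "c * (f i x0 - W i t) + c * (W i t - f i z) = c * (f i x0 - f i z)" by (simp add: algebra_simps)
    have eq2: "(\<alpha> + 1) * (1 / t0\<^sup>2) * ((1/2) * (norm (x t0 - z))\<^sup>2) = (\<alpha> + 1) * ((1/2) * ((1/t0\<^sup>2) * (norm (x t0 - z))\<^sup>2))"
      by (simp add: algebra_simps)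
    have eq3: "(\<alpha> + 1) * (- integral {t0..t} Q) = - ((\<alpha> + 1) * integral {t0..t} Q)" by simp
    show ?thesis using A1 A2 A3' A3'' A4' eq eq2 eq3 unfolding Cz_eq by argo
  qed
  have "(\<Sum>i<m. \<theta> t i * (IL + c * (W i t - f i z))) \<le> (\<Sum>i<m. \<theta> t i * (Cz - (1/t) * h' t))"
    by (rule sum_mono, rule mult_left_mono) (use each \<theta>nn tt in auto)
  moreover have "(\<Sum>i<m. \<theta> t i * (IL + c * (W i t - f i z))) = IL * (\<Sum>i<m. \<theta> t i) + c * (\<Sum>i<m. \<theta> t i * (W i t - f i z))"
    unfolding sum_distrib_left sum.distrib[symmetric] by (rule sum.cong) (auto simp: algebra_simps)
  moreover have "(\<Sum>i<m. \<theta> t i * (Cz - (1/t) * h' t)) = (\<Sum>i<m. \<theta> t i) * (Cz - (1/t) * h' t)"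
    by (simp add: sum_distrib_right)
  ultimately have "IL + c * (\<Sum>i<m. \<theta> t i * (W i t - f i z)) \<le> Cz - (1/t) * h' t"
    using \<theta>sum[OF tt] by simp
  then show "integral {t0..t} (\<lambda>s. (1 / s) * (\<Sum>i<m. \<theta> s i * (W i s - f i z)))
     + 3 / (2 * \<alpha>) * (\<Sum>i<m. \<theta> t i * (W i t - f i z))
     \<le> Cz - (1 / t) * h' t"
    unfolding IL_def L_def c_def .
qed
end
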